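(* For every weight function $w$, every $n\ge1$ and every $1\le i\le n$, $$\xi_i(0)=\max_{-1<z_1<\dots<z_{i-1}<1}\ \min_{\substack{p\in S\\ p(z_1)=\dots=p(z_{i-1})=0}}\frac{\int_{-1}^1 t\,p(t)w(t)\,dt}{\int_{-1}^1 p(t)w(t)\,dt},$$ where $S$ is the set of all nonzero polynomials $p$ of degree at most $2n-2$ with $p\ge0$ on $[-1,1]$.
   Context: A weight function is a non-negative integrable function $w$ on $[-1,1]$ with nonzero integral. $\xi_1(0)<\dots<\xi_n(0)$ denote the zeros of the orthonormal polynomial of degree $n$ with respect to $w(t)\,dt$ on $[-1,1]$. *)

theory Defs
  imports "HOL-Analysis.Analysis" "HOL-Computational_Algebra.Polynomial"
begin

definition weight_function :: "(real \<Rightarrow> real) \<Rightarrow> bool" where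
  "weight_function w \<longleftrightarrow> (\<forall>t\<in>{-1..1}. 0 \<le> w t) \<and> w integrable_on {-1..1}
     \<and> integral {-1..1} w \<noteq> 0"

definition is_orthonormal_poly :: "(real \<Rightarrow> real) \<Rightarrow> nat \<Rightarrow> real poly \<Rightarrow> bool" where
  "is_orthonormal_poly w n P \<longleftrightarrow> degree P = n \<and> lead_coeff P > 0
     \<and> (\<forall>q::real poly. degree q < n \<longrightarrow> integral {-1..1} (\<lambda>t. poly P t * poly q t * w t) = 0)
     \<and> integral {-1..1} (\<lambda>t. (poly P t)^2 * w t) = 1"

definition orth_poly :: "(real \<Rightarrow> real) \<Rightarrow> nat \<Rightarrow> real poly" where
  "orth_poly w n = (THE P. is_orthonormal_poly w n P)"

definition xi :: "(real \<Rightarrow> real) \<Rightarrow> nat \<Rightarrow> nat \<Rightarrow> real" where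
  "xi w n i = sorted_list_of_set {x. poly (orth_poly w n) x = 0} ! (i - 1)"

definition S_polys :: "nat \<Rightarrow> real poly set" where
  "S_polys n = {p. p \<noteq> 0 \<and> degree p \<le> 2 * n - 2 \<and> (\<forall>t\<in>{-1..1}. poly p t \<ge> 0)}"

definition ratio :: "(real \<Rightarrow> real) \<Rightarrow> real poly \<Rightarrow> real" where
  "ratio w p = integral {-1..1} (\<lambda>t. t * poly p t * w t) / integral {-1..1} (\<lambda>t. poly p t * w t)"

definition admissible_nodes :: "nat \<Rightarrow> real list set" where
  "admissible_nodes i = {zs. length zs = i - 1 \<and> sorted_wrt (<) zs \<and> set zs \<subseteq> {-1<..<1}}"

definition ratio_values :: "(real \<Rightarrow> real) \<Rightarrow> nat \<Rightarrow> real list \<Rightarrow> real set" where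
  "ratio_values w n zs = ratio w ` {p \<in> S_polys n. \<forall>z\<in>set zs. poly p z = 0}"

definition is_min :: "real set \<Rightarrow> real \<Rightarrow> bool" where
  "is_min A m \<longleftrightarrow> m \<in> A \<and> (\<forall>x\<in>A. m \<le> x)"

definition is_max :: "real set \<Rightarrow> real \<Rightarrow> bool" where
  "is_max A m \<longleftrightarrow> m \<in> A \<and> (\<forall>x\<in>A. x \<le> m)"

end

theory Submission
  imports Defs
begin

lemma order_lin: "order y [:-a, 1:] = (if y = a then 1 else (0::nat))" for a y :: real
proof (cases "y = a")
  case True then show ?thesis using order_power_n_n[of a 1] by simp
qed (auto intro: order_0I)

lemma order_prod_lin: "finite A \<Longrightarrow> order y (\<Prod>x\<in>A. [:-x, 1:]) = (if y \<in> A then 1 else (0::nat))" for y :: real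
proof (induction A rule: finite_induct)
  case empty
  then show ?case by (auto intro: order_0I)
next
  case (insert a A)
  have "(\<Prod>x\<in>A. [:-x, 1:]) \<noteq> (0::real poly)" using insert by auto
  moreover have "[:-a, 1:] \<noteq> (0::real poly)" by simp
  ultimately have "[:-a, 1:] * (\<Prod>x\<in>A. [:-x, 1:]) \<noteq> 0" by (metis mult_eq_0_iff)
  have e: "(\<Prod>x\<in>insert a A. [:-x, 1:]) = [:-a, 1:] * (\<Prod>x\<in>A. [:-x, 1:])" using insert by simp
  show ?case unfolding e order_mult[OF \<open>[:-a, 1:] * (\<Prod>x\<in>A. [:-x, 1:]) \<noteq> 0\<close>] order_lin insert.IH
    using insert by auto
qed

lemma even_sign:
  fixes f :: "real poly"
  assumes "f \<noteq> 0" "\<And>y. y \<in> {-1<..<1} \<Longrightarrow> even (order y f)"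
  shows "(\<forall>x\<in>{-1..1}. 0 \<le> poly f x) \<or> (\<forall>x\<in>{-1..1}. poly f x \<le> 0)"
  using assms
proof (induction "degree f" arbitrary: f rule: less_induct)
  case less
  show ?case
  proof (cases "\<exists>a\<in>{-1<..<1}. poly f a = 0")
    case True
    then obtain a where a: "a \<in> {-1<..<1}" "poly f a = 0" by blast
    have "order a f \<noteq> 0" using a less.prems(1) order_root by blast
    with less.prems(2)[OF a(1)] have "2 \<le> order a f" by presburger
    hence "[:-a, 1:]^2 dvd f" using order_1[of a f] le_imp_power_dvd dvd_trans by blast
    then obtain g where g: "f = [:-a, 1:]^2 * g" by (elim dvdE)
    have g0: "g \<noteq> 0" using g less.prems(1) by auto
    have dg: "degree f = 2 + degree g" using g g0 by (simp add: degree_mult_eq degree_power_eq)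
    have og: "even (order y g)" if "y \<in> {-1<..<1}" for y
    proof -
      have "order y f = order y ([:-a, 1:]^2) + order y g" using g less.prems(1) order_mult by metis
      moreover have "order y ([:-a, 1:]^2) = (if y = a then 2 else 0)"
        using order_power_n_n[of a 2] by (auto intro: order_0I)
      ultimately show ?thesis using less.prems(2)[OF that] by (auto split: if_splits)
    qed
    have "(\<forall>x\<in>{-1..1}. 0 \<le> poly g x) \<or> (\<forall>x\<in>{-1..1}. poly g x \<le> 0)"
      using less.hyps[of g] dg g0 og by auto
    then show ?thesis unfolding g by (auto simp: mult_nonneg_nonneg mult_nonneg_nonpos)
  next
    case False
    show ?thesis
    proof (rule ccontr)
      assume "\<not> ?thesis"
      then obtain x0 x1 where x: "x0 \<in> {-1..1}" "x1 \<in> {-1..1}" "poly f x0 < 0" "0 < poly f x1"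
        by (auto simp: not_le)
      have "x0 \<noteq> x1" using x by auto
      hence "x0 < x1 \<or> x1 < x0" by linarith
      then obtain y where "y \<in> {-1<..<1}" "poly f y = 0"
      proof
        assume "x0 < x1"
        then obtain y where "x0 < y" "y < x1" "poly f y = 0" using poly_IVT_pos x by blast
        then show ?thesis using that[of y] x by auto
      next
        assume "x1 < x0"
        then obtain y where "x1 < y" "y < x0" "poly f y = 0" using poly_IVT_neg x by blast
        then show ?thesis using that[of y] x by auto
      qed
      with False show False by blast
    qed
  qed
qed

lemma near_left:
  fixes h :: "real poly"
  assumes "0 < poly h a" "b < a"
  shows "\<exists>t\<in>{b<..<a}. 0 < poly h t"
proof -
  have "(poly h \<longlongrightarrow> poly h a) (at_left a)"
    by (intro tendsto_intros)
  hence "eventually (\<lambda>t. 0 < poly h t) (at_left a)"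
    using assms(1) by (rule order_tendstoD(1))
  moreover have "eventually (\<lambda>t. t \<in> {b<..<a}) (at_left a)"
    using eventually_at_left_real[OF assms(2)] .
  ultimately have "eventually (\<lambda>t. 0 < poly h t \<and> t \<in> {b<..<a}) (at_left a)"
    by eventually_elim auto
  then show ?thesis using eventually_happens'[OF trivial_limit_at_left_real] by blast
qed
lemma near_right:
  fixes h :: "real poly"
  assumes "0 < poly h a" "a < b"
  shows "\<exists>t\<in>{a<..<b}. 0 < poly h t"
proof -
  have "(poly h \<longlongrightarrow> poly h a) (at_right a)"
    by (intro tendsto_intros)
  hence "eventually (\<lambda>t. 0 < poly h t) (at_right a)"
    using assms(1) by (rule order_tendstoD(1))
  moreover have "eventually (\<lambda>t. t \<in> {a<..<b}) (at_right a)"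
    using eventually_at_right_real[OF assms(2)] .
  ultimately have "eventually (\<lambda>t. 0 < poly h t \<and> t \<in> {a<..<b}) (at_right a)"
    by eventually_elim auto
  then show ?thesis using eventually_happens'[OF trivial_limit_at_right_real] by blast
qed

lemma near_left_neg:
  fixes h :: "real poly"
  assumes "poly h a < 0" "b < a"
  shows "\<exists>t\<in>{b<..<a}. poly h t < 0"
  using near_left[of "-h" a b] assms by auto

lemma near_right_neg:
  fixes h :: "real poly"
  assumes "poly h a < 0" "a < b"
  shows "\<exists>t\<in>{a<..<b}. poly h t < 0"
  using near_right[of "-h" a b] assms by auto

lemma root_square:
  fixes g :: "real poly"
  assumes nn: "\<And>t. t \<in> {-1..1} \<Longrightarrow> 0 \<le> poly g t" and a: "a \<in> {-1<..<1}" and ga: "poly g a = 0"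
  shows "\<exists>s. g = [:-a, 1:]^2 * s \<and> (\<forall>t\<in>{-1..1}. 0 \<le> poly s t)"
proof -
  obtain h where h: "g = [:-a, 1:] * h" using ga poly_eq_0_iff_dvd by (metis dvdE)
  have ha: "poly h a = 0"
  proof (rule ccontr)
    assume "poly h a \<noteq> 0"
    hence "poly h a < 0 \<or> 0 < poly h a" by linarith
    then show False
    proof
      assume "0 < poly h a"
      then obtain t where t: "t \<in> {-1<..<a}" "0 < poly h t" using near_left a by fastforce
      hence "poly g t < 0" unfolding h by (simp add: mult_neg_pos)
      with nn[of t] t a show False by auto
    next
      assume "poly h a < 0"
      then obtain t where t: "t \<in> {a<..<1}" "poly h t < 0" using near_right_neg a by fastforce
      hence "poly g t < 0" unfolding h by (simp add: mult_pos_neg)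
      with nn[of t] t a show False by auto
    qed
  qed
  obtain s where s: "h = [:-a, 1:] * s" using ha poly_eq_0_iff_dvd by (metis dvdE)
  have g: "g = [:-a, 1:]^2 * s" unfolding h s power2_eq_square by (simp only: mult.assoc)
  have sn: "0 \<le> poly s t" if "t \<in> {-1..1}" "t \<noteq> a" for t
  proof -
    have "poly g t = (t - a)^2 * poly s t" unfolding g by (simp add: power2_eq_square algebra_simps)
    hence "0 \<le> (t - a)^2 * poly s t" using nn[OF that(1)] by simp
    moreover have "0 < (t - a)^2" using that by simp
    ultimately show ?thesis by (simp add: zero_le_mult_iff)
  qed
  have "0 \<le> poly s a"
  proof (rule ccontr)
    assume "\<not> 0 \<le> poly s a"
    then obtain t where t: "t \<in> {a<..<1}" "poly s t < 0" using near_right_neg[of s a 1] a by auto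
    with sn[of t] a show False by auto
  qed
  with sn g show ?thesis by (metis)
qed

lemma factor_roots:
  fixes p :: "real poly"
  assumes "finite Z" "Z \<subseteq> {-1<..<1}" "\<And>t. t \<in> {-1..1} \<Longrightarrow> 0 \<le> poly p t" "\<And>z. z \<in> Z \<Longrightarrow> poly p z = 0"
  shows "\<exists>s. p = (\<Prod>z\<in>Z. [:-z, 1:]^2) * s \<and> (\<forall>t\<in>{-1..1}. 0 \<le> poly s t)"
  using assms
proof (induction Z rule: finite_induct)
  case empty
  then show ?case by auto
next
  case (insert a A)
  then obtain s where s: "p = (\<Prod>z\<in>A. [:-z, 1:]^2) * s" "\<forall>t\<in>{-1..1}. 0 \<le> poly s t" by auto
  have "poly (\<Prod>z\<in>A. [:-z, 1:]^2) a \<noteq> 0" using insert(2) by (auto simp: poly_prod prod_zero_iff[OF insert(1)])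
  moreover have "poly p a = 0" using insert by auto
  ultimately have "poly s a = 0" unfolding s by simp
  then obtain s' where s': "s = [:-a, 1:]^2 * s'" "\<forall>t\<in>{-1..1}. 0 \<le> poly s' t"
    using root_square[of s a] s(2) insert(4) by auto
  have "p = (\<Prod>z\<in>insert a A. [:-z, 1:]^2) * s'" unfolding s(1) s'(1) using insert(1,2) by (simp add: mult_ac)
  with s'(2) show ?case by blast
qed

lemma spike0: fixes S :: "real set" and w :: "real \<Rightarrow> real"
  shows "negligible S \<Longrightarrow> (\<And>x. x \<in> {-1..1} - S \<Longrightarrow> w x = 0) \<Longrightarrow> integral {-1..1} w = 0"
  using integral_spike[of S "{-1..1::real}" "\<lambda>_. 0::real" w] by simp

locale wf =
  fixes w :: "real \<Rightarrow> real"
  assumes wf: "weight_function w"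
begin

definition I :: "real poly \<Rightarrow> real" where
  "I f = integral {-1..1} (\<lambda>t. poly f t * w t)"

lemma w_nonneg: "t \<in> {-1..1} \<Longrightarrow> 0 \<le> w t" using wf by (auto simp: weight_function_def)
lemma w_int: "w integrable_on {-1..1}" using wf by (auto simp: weight_function_def)
lemma w_int0: "integral {-1..1} w \<noteq> 0" using wf by (auto simp: weight_function_def)

lemma w_abs: "w absolutely_integrable_on {-1..1}"
  using nonnegative_absolutely_integrable_1[OF w_int] w_nonneg by blast

lemma pw_abs: "(\<lambda>t. poly f t * w t) absolutely_integrable_on {-1..1}"
proof (rule absolutely_integrable_bounded_measurable_product_real[OF _ _ _ w_abs])
  show "poly f \<in> borel_measurable (lebesgue_on {-1..1})"
    by (intro continuous_imp_measurable_on_sets_lebesgue) (auto intro: continuous_intros)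
  show "{-1..1::real} \<in> sets lebesgue" by simp
  show "bounded (poly f ` {-1..1})"
    by (intro compact_imp_bounded compact_continuous_image) (auto intro: continuous_intros)
qed

lemma pw_int: "(\<lambda>t. poly f t * w t) integrable_on {-1..1}"
  using pw_abs absolutely_integrable_on_def by blast

lemma I_nonneg: "(\<And>t. t \<in> {-1..1} \<Longrightarrow> 0 \<le> poly f t) \<Longrightarrow> 0 \<le> I f"
  unfolding I_def by (intro integral_nonneg pw_int) (auto intro!: mult_nonneg_nonneg w_nonneg)

lemma I_pos:
  assumes "f \<noteq> 0" "\<And>t. t \<in> {-1..1} \<Longrightarrow> 0 \<le> poly f t"
  shows "0 < I f"
proof (rule ccontr)
  assume "\<not> 0 < I f"
  with I_nonneg[OF assms(2)] have I0: "I f = 0" by simp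
  define g where "g = (\<lambda>t. poly f t * w t)"
  have si: "set_integrable lebesgue {-1..1} g" using pw_abs unfolding g_def by simp
  have "(LINT x:{-1..1} | lebesgue. g x) = 0"
    using set_lebesgue_integral_eq_integral(2)[OF si] I0 unfolding I_def g_def by simp
  hence "integral\<^sup>L lebesgue (\<lambda>x. indicator {-1..1} x *\<^sub>R g x) = 0"
    by (simp add: set_lebesgue_integral_def)
  moreover have "integrable lebesgue (\<lambda>x. indicator {-1..1} x *\<^sub>R g x)"
    using si by (simp add: set_integrable_def)
  moreover have "AE x in lebesgue. 0 \<le> indicator {-1..1} x *\<^sub>R g x"
    using assms(2) w_nonneg by (auto simp: g_def indicator_def)
  ultimately have "AE x in lebesgue. indicator {-1..1} x *\<^sub>R g x = 0"
    using integral_nonneg_eq_0_iff_AE by blast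
  then obtain N where N: "{x \<in> space lebesgue. \<not> indicator {-1..1} x *\<^sub>R g x = 0} \<subseteq> N"
      "emeasure lebesgue N = 0" "N \<in> sets lebesgue"
    by (rule AE_E)
  have negN: "negligible N" using N by (simp add: negligible_iff_null_sets null_sets_def)
  have negR: "negligible {x. poly f x = 0}" using poly_roots_finite[OF assms(1)] by blast
  have "integral {-1..1} w = 0"
  proof (rule spike0)
    show "negligible (N \<union> {x. poly f x = 0})" using negN negR by simp
  next
    fix x assume x: "x \<in> {-1..1} - (N \<union> {x. poly f x = 0})"
    hence "indicator {-1..1} x *\<^sub>R g x = 0" using N(1) by (auto simp: indicator_def)
    with x show "w x = 0" by (auto simp: g_def indicator_def)
  qed
  with w_int0 show False by simp
qed

lemma I_add: "I (f + g) = I f + I g"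
  unfolding I_def using integral_add[OF pw_int[of f] pw_int[of g]] by (simp add: distrib_right)

lemma I_smult: "I (smult a f) = a * I f"
  unfolding I_def using integral_mult[OF pw_int[of f], of a] by (simp add: mult.assoc)

lemma I_diff: "I (f - g) = I f - I g"
  unfolding I_def using integral_diff[OF pw_int[of f] pw_int[of g]] by (simp add: left_diff_distrib)

lemma I_zero[simp]: "I 0 = 0" unfolding I_def by simp

lemma I_sum: "finite A \<Longrightarrow> I (sum F A) = (\<Sum>k\<in>A. I (F k))"
  by (induction A rule: finite_induct) (auto simp: I_add)

lemma I_square_pos: "f \<noteq> 0 \<Longrightarrow> 0 < I (f * f)"
  by (rule I_pos) auto

definition orth :: "nat \<Rightarrow> real poly \<Rightarrow> bool" where
  "orth k P \<longleftrightarrow> (\<forall>q. degree q < k \<longrightarrow> I (P * q) = 0)"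

lemma exists_orth: "\<exists>P. degree P = k \<and> lead_coeff P = 1 \<and> orth k P"
proof (induction k rule: less_induct)
  case (less k)
  define Q where "Q = (\<lambda>j. SOME P. degree P = j \<and> lead_coeff P = 1 \<and> orth j P)"
  have Q: "degree (Q j) = j \<and> lead_coeff (Q j) = 1 \<and> orth j (Q j)" if "j < k" for j
    unfolding Q_def by (rule someI_ex) (use less that in blast)
  have Q0: "Q j \<noteq> 0" if "j < k" for j using Q[OF that] by auto
  have QQ: "I (Q i * Q j) = 0" if "i < k" "j < k" "i \<noteq> j" for i j
  proof (cases "i < j")
    case True
    then show ?thesis using Q[OF that(2)] Q[OF that(1)] unfolding orth_def by (simp add: mult.commute)
  next
    case False
    then have "j < i" using that by simp
    then show ?thesis using Q[OF that(2)] Q[OF that(1)] unfolding orth_def by simp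
  qed
  define al where "al = (\<lambda>j. I (monom 1 k * Q j) / I (Q j * Q j))"
  define P where "P = monom 1 k - (\<Sum>j<k. smult (al j) (Q j))"
  have PQ: "I (P * Q i) = 0" if "i < k" for i
  proof -
    have "P * Q i = monom 1 k * Q i - (\<Sum>j<k. smult (al j) (Q j * Q i))"
      unfolding P_def by (simp add: left_diff_distrib sum_distrib_right)
    hence "I (P * Q i) = I (monom 1 k * Q i) - (\<Sum>j<k. al j * I (Q j * Q i))"
      by (simp add: I_diff I_sum I_smult)
    also have "(\<Sum>j<k. al j * I (Q j * Q i)) = al i * I (Q i * Q i)"
    proof -
      have "(\<Sum>j<k. al j * I (Q j * Q i)) = (\<Sum>j\<in>{i}. al j * I (Q j * Q i))"
        by (rule sum.mono_neutral_right) (use that QQ in auto)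
      then show ?thesis by simp
    qed
    also have "\<dots> = I (monom 1 k * Q i)"
      unfolding al_def using I_square_pos[OF Q0[OF that]] by simp
    finally show ?thesis by simp
  qed
  have "\<forall>q. degree q < m \<longrightarrow> I (P * q) = 0" if "m \<le> k" for m
    using that
  proof (induction m)
    case 0
    then show ?case by simp
  next
    case (Suc m)
    show ?case
    proof (intro allI impI)
      fix q :: "real poly" assume dq: "degree q < Suc m"
      define r where "r = q - smult (coeff q m) (Q m)"
      have mk: "m < k" using Suc by simp
      have r0: "I (P * r) = 0"
      proof (cases "r = 0")
        case False
        have "degree r \<le> m" unfolding r_def using dq Q[OF mk]
          by (intro degree_diff_le) auto
        moreover have "coeff r m = 0" unfolding r_def using Q[OF mk] by auto
        ultimately have "degree r < m" using False
          by (metis leading_coeff_0_iff le_neq_implies_less)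
        then show ?thesis using Suc by simp
      qed simp
      have "q = r + smult (coeff q m) (Q m)" unfolding r_def by simp
      hence "I (P * q) = I (P * r) + coeff q m * I (P * Q m)"
        by (metis I_add I_smult distrib_left mult_smult_right)
      then show "I (P * q) = 0" using r0 PQ[OF mk] by simp
    qed
  qed
  hence orthP: "orth k P" unfolding orth_def by blast
  have ds: "degree (\<Sum>j<k. smult (al j) (Q j)) < k \<or> k = 0"
  proof (cases "k = 0")
    case False
    have "degree (smult (al j) (Q j)) < k" if "j \<in> {..<k}" for j
      using degree_smult_le[of "al j" "Q j"] Q[of j] that by auto
    then show ?thesis using False by (intro disjI1 degree_sum_less) auto
  qed simp
  have dP: "degree P \<le> k" unfolding P_def
    using ds by (intro degree_diff_le) (auto simp: degree_monom_eq)
  have cP: "coeff P k = 1" unfolding P_def using ds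
    by (auto simp: coeff_diff coeff_monom coeff_eq_0)
  have "degree P = k" using dP cP by (metis le_antisym le_degree zero_neq_one)
  with cP orthP show ?case by auto
qed

lemma iso_iff: "is_orthonormal_poly w n P \<longleftrightarrow> degree P = n \<and> lead_coeff P > 0 \<and> orth n P \<and> I (P * P) = 1"
  unfolding is_orthonormal_poly_def orth_def I_def by (simp add: power2_eq_square)

lemma orth_smult: "orth k P \<Longrightarrow> orth k (smult c P)"
  unfolding orth_def by (simp add: I_smult)

lemma ex1_orthonormal: "\<exists>!P. is_orthonormal_poly w n P"
proof -
  obtain P0 where P0: "degree P0 = n" "lead_coeff P0 = 1" "orth n P0" using exists_orth by blast
  have P00: "P0 \<noteq> 0" using P0 by auto
  define c where "c = 1 / sqrt (I (P0 * P0))"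
  have pos: "0 < I (P0 * P0)" using I_square_pos[OF P00] .
  have c: "0 < c" unfolding c_def using pos by simp
  have "I (smult c P0 * smult c P0) = c * (c * I (P0 * P0))"
    by (simp only: mult_smult_left mult_smult_right I_smult)
  also have "\<dots> = 1" unfolding c_def using pos
    by (simp add: field_simps)
  finally have "I (smult c P0 * smult c P0) = 1" .
  hence "is_orthonormal_poly w n (smult c P0)"
    unfolding iso_iff using P0 c pos by (auto simp: orth_smult)
  moreover have "P1 = P2" if h1: "is_orthonormal_poly w n P1" and h2: "is_orthonormal_poly w n P2" for P1 P2
  proof -
    note a = h1[unfolded iso_iff] h2[unfolded iso_iff]
    define R where "R = smult (lead_coeff P2) P1 - smult (lead_coeff P1) P2"
    have R0: "R = 0"
    proof (rule ccontr)
      assume "R \<noteq> 0"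
      have "degree R \<le> n" unfolding R_def using a by (intro degree_diff_le) auto
      moreover have "coeff R n = 0" unfolding R_def using a by (auto simp: algebra_simps)
      ultimately have dR: "degree R < n" using \<open>R \<noteq> 0\<close>
        by (metis leading_coeff_0_iff le_neq_implies_less)
      have "I (R * R) = lead_coeff P2 * I (P1 * R) - lead_coeff P1 * I (P2 * R)"
        unfolding R_def by (simp add: left_diff_distrib I_diff I_smult)
      also have "\<dots> = 0" using a dR unfolding orth_def by simp
      finally show False using I_square_pos[OF \<open>R \<noteq> 0\<close>] by simp
    qed
    define d where "d = lead_coeff P1 / lead_coeff P2"
    have d: "0 < d" unfolding d_def using a by (metis divide_pos_pos)
    have "smult (lead_coeff P2) P1 = smult (lead_coeff P1) P2" using R0 unfolding R_def by simp
    hence "smult (1 / lead_coeff P2) (smult (lead_coeff P2) P1) = smult (1 / lead_coeff P2) (smult (lead_coeff P1) P2)"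
      by simp
    hence P1: "P1 = smult d P2" using a unfolding d_def by (simp add: smult_smult split: if_splits)
    have "1 = I (P1 * P1)" using a by simp
    also have "\<dots> = d * d" using a by (simp add: P1 I_smult)
    finally have "d^2 = 1" by (simp add: power2_eq_square)
    hence "d = 1" using d by (simp add: power2_eq_1_iff) 
    then show ?thesis using P1 by simp
  qed
  ultimately show ?thesis by blast
qed

definition OP where "OP n = orth_poly w n"

lemma OP: "degree (OP n) = n" "orth n (OP n)" "lead_coeff (OP n) > 0"
  using theI'[OF ex1_orthonormal[of n]] unfolding OP_def orth_poly_def iso_iff by auto

lemma I_uminus: "I (- f) = - I f" using I_diff[of 0 f] by simp

lemma roots_OP:
  shows "{x. poly (OP n) x = 0} \<subseteq> {-1<..<1}" "card {x. poly (OP n) x = 0} = n"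
proof -
  define P where "P = OP n"
  have dP: "degree P = n" and oP: "orth n P" using OP unfolding P_def by auto
  have P0: "P \<noteq> 0" using OP(3)[of n] unfolding P_def by auto
  define R where "R = {x. poly P x = 0}"
  define Y where "Y = {y\<in>{-1<..<1}. odd (order y P)}"
  have finR: "finite R" unfolding R_def using poly_roots_finite[OF P0] .
  have YR: "Y \<subseteq> R" unfolding Y_def R_def using order_root by fastforce
  have finY: "finite Y" using finite_subset[OF YR finR] .
  have cR: "card R \<le> n" unfolding R_def using card_poly_roots_bound[OF P0] dP by simp
  have cY: "n \<le> card Y"
  proof (rule ccontr)
    assume "\<not> n \<le> card Y"
    hence lt: "card Y < n" by simp
    define q where "q = (\<Prod>y\<in>Y. [:-y, 1:])"
    have q0: "q \<noteq> 0" unfolding q_def using finY by auto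
    have dq: "degree q = card Y" unfolding q_def
      by (subst degree_prod_sum_eq) auto
    have I0: "I (P * q) = 0" using oP dq lt unfolding orth_def by simp
    have Pq0: "P * q \<noteq> 0" using P0 q0 by simp
    have ev: "even (order y (P * q))" if "y \<in> {-1<..<1}" for y
    proof -
      have "order y (P*q) = order y P + order y q" by (rule order_mult[OF Pq0])
      moreover have "order y q = (if y\<in>Y then 1 else 0)" unfolding q_def by (rule order_prod_lin[OF finY])
      ultimately show ?thesis using that by (auto simp: Y_def)
    qed
    from even_sign[OF Pq0 ev] show False
    proof
      assume "\<forall>x\<in>{-1..1}. 0 \<le> poly (P * q) x"
      then show False using I_pos[OF Pq0] I0 by auto
    next
      assume "\<forall>x\<in>{-1..1}. poly (P * q) x \<le> 0"
      then have "0 < I (- (P * q))" using Pq0 by (intro I_pos) auto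
      then show False using I0 I_uminus by simp
    qed
  qed
  have "card Y = card R" using card_mono[OF finR YR] cR cY by simp
  hence "Y = R" using card_subset_eq[OF finR YR] by simp
  hence "R \<subseteq> {-1<..<1}" unfolding Y_def by auto
  then show "{x. poly (OP n) x = 0} \<subseteq> {-1<..<1}" unfolding R_def P_def .
  show "card {x. poly (OP n) x = 0} = n" using \<open>Y = R\<close> cR cY unfolding R_def P_def by simp
qed


definition xs :: "nat \<Rightarrow> real list" where "xs n = sorted_list_of_set {x. poly (OP n) x = 0}"

lemma xs_props: "length (xs n) = n" "sorted_wrt (<) (xs n)" "set (xs n) = {x. poly (OP n) x = 0}"
    "set (xs n) \<subseteq> {-1<..<1}"
proof -
  have P0: "OP n \<noteq> 0" using OP(3)[of n] by auto
  have fin: "finite {x. poly (OP n) x = 0}" using poly_roots_finite[OF P0] .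
  show "length (xs n) = n" unfolding xs_def using roots_OP(2) by simp
  show "sorted_wrt (<) (xs n)" unfolding xs_def by simp
  show "set (xs n) = {x. poly (OP n) x = 0}" unfolding xs_def using fin by simp
  then show "set (xs n) \<subseteq> {-1<..<1}" using roots_OP(1) by simp
qed

abbreviation xi' :: "nat \<Rightarrow> nat \<Rightarrow> real" where "xi' n k \<equiv> xs n ! k"

lemma xi_root: "k < n \<Longrightarrow> poly (OP n) (xi' n k) = 0"
  using xs_props[of n] nth_mem[of k "xs n"] by auto

lemma xi_in: "k < n \<Longrightarrow> xi' n k \<in> {-1<..<1}"
  using xs_props[of n] nth_mem[of k "xs n"] by auto

lemma xi_less: "k < j \<Longrightarrow> j < n \<Longrightarrow> xi' n k < xi' n j"
  using sorted_wrt_nth_less[OF xs_props(2)[of n], of k j] xs_props(1)[of n] by simp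

lemma xi_mono: "k \<le> j \<Longrightarrow> j < n \<Longrightarrow> xi' n k \<le> xi' n j"
  using xi_less[of k j n] by (cases "k = j") auto

lemma xi_inj: "k < n \<Longrightarrow> j < n \<Longrightarrow> xi' n k = xi' n j \<Longrightarrow> k = j"
  using xi_less by (metis less_irrefl linorder_neqE_nat)

definition lag :: "nat \<Rightarrow> nat \<Rightarrow> real poly" where
  "lag n k = (\<Prod>j\<in>{..<n}-{k}. [:-(xi' n j), 1:])"

lemma lag_deg: "k < n \<Longrightarrow> degree (lag n k) = n - 1"
  unfolding lag_def by (subst degree_prod_sum_eq) auto

lemma lag_zero: "j < n \<Longrightarrow> j \<noteq> k \<Longrightarrow> poly (lag n k) (xi' n j) = 0"
  unfolding lag_def poly_prod by (rule prod_zero) auto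

lemma lag_nz: "k < n \<Longrightarrow> poly (lag n k) (xi' n k) \<noteq> 0"
  unfolding lag_def poly_prod using xi_inj[of k n] by (auto simp: prod_zero_iff)

lemma interp:
  assumes "degree r < n"
  shows "r = (\<Sum>k<n. smult (poly r (xi' n k) / poly (lag n k) (xi' n k)) (lag n k))"
proof (rule poly_eqI_degree[where A = "(\<lambda>k. xi' n k) ` {..<n}"])
  have cA: "card ((\<lambda>k. xi' n k) ` {..<n}) = n"
    by (subst card_image) (auto intro: inj_onI xi_inj)
  show "degree r < card ((\<lambda>k. xi' n k) ` {..<n})" using assms cA by simp
  have "degree (\<Sum>k<n. smult (poly r (xi' n k) / poly (lag n k) (xi' n k)) (lag n k)) \<le> n - 1"
    by (rule degree_sum_le) (auto intro: order_trans[OF degree_smult_le] simp: lag_deg)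
  then show "degree (\<Sum>k<n. smult (poly r (xi' n k) / poly (lag n k) (xi' n k)) (lag n k)) < card ((\<lambda>k. xi' n k) ` {..<n})"
    using cA assms by linarith
  fix x assume "x \<in> (\<lambda>k. xi' n k) ` {..<n}"
  then obtain j where j: "j < n" "x = xi' n j" by auto
  have "poly (\<Sum>k<n. smult (poly r (xi' n k) / poly (lag n k) (xi' n k)) (lag n k)) x
      = (\<Sum>k<n. poly r (xi' n k) / poly (lag n k) (xi' n k) * poly (lag n k) x)"
    by (simp add: poly_sum)
  also have "\<dots> = (\<Sum>k\<in>{j}. poly r (xi' n k) / poly (lag n k) (xi' n k) * poly (lag n k) x)"
    by (rule sum.mono_neutral_right) (use j lag_zero in auto)
  also have "\<dots> = poly r x" using j lag_nz[of j n] by simp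
  finally show "poly r x = poly (\<Sum>k<n. smult (poly r (xi' n k) / poly (lag n k) (xi' n k)) (lag n k)) x"
    by simp
qed

definition mu :: "nat \<Rightarrow> nat \<Rightarrow> real" where
  "mu n k = I (lag n k) / poly (lag n k) (xi' n k)"

lemma quad:
  assumes "1 \<le> n" "degree f < 2 * n"
  shows "I f = (\<Sum>k<n. mu n k * poly f (xi' n k))"
proof -
  define P where "P = OP n"
  have P0: "P \<noteq> 0" using OP(3)[of n] unfolding P_def by auto
  have dP: "degree P = n" using OP unfolding P_def by simp
  define q where "q = f div P"
  define r where "r = f mod P"
  have fqr: "f = q * P + r" unfolding q_def r_def by simp
  have dr: "degree r < n"
    using degree_mod_less[OF P0, of f] dP assms(1) unfolding r_def by auto
  have dq: "degree q < n"
  proof (cases "q = 0")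
    case False
    have "degree (q * P) = degree q + n" using False P0 dP by (simp add: degree_mult_eq)
    moreover have "degree (q * P) < 2 * n"
    proof -
      have "q * P = f - r" using fqr by simp
      hence "degree (q * P) \<le> max (degree f) (degree r)" by (metis degree_diff_le_max)
      then show ?thesis using assms dr by linarith
    qed
    ultimately show ?thesis by simp
  qed (use assms in simp)
  have "I (q * P) = 0" using OP(2)[of n] dq unfolding orth_def P_def by (simp add: mult.commute)
  hence "I f = I r" using fqr by (simp add: I_add)
  also have "\<dots> = (\<Sum>k<n. poly r (xi' n k) / poly (lag n k) (xi' n k) * I (lag n k))"
    by (subst interp[OF dr]) (simp add: I_sum I_smult)
  also have "\<dots> = (\<Sum>k<n. mu n k * poly f (xi' n k))"
  proof (rule sum.cong)
    fix k assume k: "k \<in> {..<n}"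
    have "poly f (xi' n k) = poly r (xi' n k)"
      using xi_root[of k n] k unfolding fqr P_def by simp
    then show "poly r (xi' n k) / poly (lag n k) (xi' n k) * I (lag n k) = mu n k * poly f (xi' n k)"
      unfolding mu_def by simp
  qed simp
  finally show ?thesis .
qed

lemma mu_pos:
  assumes "1 \<le> n" "c < n"
  shows "0 < mu n c"
proof -
  have d: "degree (lag n c * lag n c) < 2 * n"
    using lag_deg[OF assms(2)] assms(1) degree_mult_le[of "lag n c" "lag n c"] by simp
  have "I (lag n c * lag n c) = (\<Sum>k<n. mu n k * poly (lag n c * lag n c) (xi' n k))"
    by (rule quad[OF assms(1) d])
  also have "\<dots> = (\<Sum>k\<in>{c}. mu n k * poly (lag n c * lag n c) (xi' n k))"
    by (rule sum.mono_neutral_right) (use assms lag_zero in auto)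
  also have "\<dots> = mu n c * (poly (lag n c) (xi' n c))^2" by (simp add: power2_eq_square)
  finally have e: "I (lag n c * lag n c) = mu n c * (poly (lag n c) (xi' n c))^2" .
  have "lag n c \<noteq> 0" using lag_nz[OF assms(2)] by auto
  hence "0 < I (lag n c * lag n c)" by (rule I_square_pos)
  moreover have "0 < (poly (lag n c) (xi' n c))^2" using lag_nz[OF assms(2)] by simp
  ultimately show ?thesis using e by (simp add: zero_less_mult_iff)
qed


lemma lower:
  assumes "1 \<le> n" "c < n" "degree f < 2 * n - 1" "\<And>k. k < n \<Longrightarrow> 0 \<le> poly f (xi' n k)"
    "\<And>k. k < c \<Longrightarrow> poly f (xi' n k) = 0"
  shows "xi' n c * I f \<le> I ([:0, 1:] * f)"
proof -
  define g where "g = [:-xi' n c, 1:] * f"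
  have dg: "degree g < 2 * n" unfolding g_def using degree_mult_le[of "[:-xi' n c, 1:]" f] assms(3) by simp
  have "I g = (\<Sum>k<n. mu n k * poly g (xi' n k))" by (rule quad[OF assms(1) dg])
  also have "\<dots> \<ge> 0"
  proof (rule sum_nonneg)
    fix k assume k: "k \<in> {..<n}"
    show "0 \<le> mu n k * poly g (xi' n k)"
    proof (cases "k < c")
      case True then show ?thesis using assms(5) unfolding g_def by simp
    next
      case False
      then have "xi' n c \<le> xi' n k" using k by (intro xi_mono) auto
      have e: "poly g (xi' n k) = (xi' n k - xi' n c) * poly f (xi' n k)" unfolding g_def by (simp add: algebra_simps)
      show ?thesis unfolding e using mu_pos[OF assms(1), of k] k assms(4)[of k] \<open>xi' n c \<le> xi' n k\<close>
        by (intro mult_nonneg_nonneg) auto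
    qed
  qed
  finally have "0 \<le> I g" .
  moreover have "[:0, 1:] * f = g + smult (xi' n c) f" unfolding g_def by (simp add: algebra_simps)
  ultimately show ?thesis by (simp add: I_add I_smult)
qed

lemma upper:
  assumes "1 \<le> n" "c < n" "degree f < 2 * n - 1" "\<And>k. k < n \<Longrightarrow> 0 \<le> poly f (xi' n k)"
    "\<And>k. c < k \<Longrightarrow> k < n \<Longrightarrow> poly f (xi' n k) = 0"
  shows "I ([:0, 1:] * f) \<le> xi' n c * I f"
proof -
  define g where "g = [:-xi' n c, 1:] * f"
  have dg: "degree g < 2 * n" unfolding g_def using degree_mult_le[of "[:-xi' n c, 1:]" f] assms(3) by simp
  have "I g = (\<Sum>k<n. mu n k * poly g (xi' n k))" by (rule quad[OF assms(1) dg])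
  also have "\<dots> \<le> 0"
  proof (rule sum_nonpos)
    fix k assume k: "k \<in> {..<n}"
    show "mu n k * poly g (xi' n k) \<le> 0"
    proof (cases "c < k")
      case True then show ?thesis using assms(5) k unfolding g_def by simp
    next
      case False
      then have "xi' n k \<le> xi' n c" using assms(2) by (intro xi_mono) auto
      have e: "poly g (xi' n k) = (xi' n k - xi' n c) * poly f (xi' n k)" unfolding g_def by (simp add: algebra_simps)
      show ?thesis unfolding e using mu_pos[OF assms(1), of k] k assms(4)[of k] \<open>xi' n k \<le> xi' n c\<close>
        by (intro mult_nonneg_nonpos mult_nonpos_nonneg) auto
    qed
  qed
  finally have "I g \<le> 0" .
  moreover have "[:0, 1:] * f = g + smult (xi' n c) f" unfolding g_def by (simp add: algebra_simps)
  ultimately show ?thesis by (simp add: I_add I_smult)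
qed

lemma ratio_eq: "ratio w p = I ([:0, 1:] * p) / I p"
  unfolding ratio_def I_def by (simp add: mult.assoc)


lemma sq_nonneg_poly: "0 \<le> poly (f * f) t" for f :: "real poly" by simp

lemma degree_qZ:
  assumes "finite Z"
  shows "degree (\<Prod>z\<in>Z. [:-z, 1:]^2 :: real poly) = 2 * card Z"
proof -
  have "degree (\<Prod>z\<in>Z. [:-z, 1:]^2 :: real poly) = (\<Sum>z\<in>Z. degree ([:-z, 1:]^2 :: real poly))"
    by (rule degree_prod_sum_eq) simp
  also have "\<dots> = (\<Sum>z\<in>Z. 2)" by (simp add: degree_power_eq)
  finally show ?thesis by simp
qed

lemma qZ_nonneg: "0 \<le> poly (\<Prod>z\<in>Z. [:-z, 1:]^2 :: real poly) t"
  by (simp add: poly_prod prod_nonneg)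

lemma qZ_root: "finite Z \<Longrightarrow> z \<in> Z \<Longrightarrow> poly (\<Prod>z\<in>Z. [:-z, 1:]^2 :: real poly) z = 0"
  by (auto simp: poly_prod prod_zero_iff)

lemma qZ_nz: "finite Z \<Longrightarrow> (\<Prod>z\<in>Z. [:-z, 1:]^2 :: real poly) \<noteq> 0"
  by auto

lemma min_exists:
  assumes n: "1 \<le> n" and c: "c < n" and zs: "zs \<in> admissible_nodes (Suc c)"
  shows "\<exists>m. is_min (ratio_values w n zs) m"
proof -
  define Z where "Z = set zs"
  have dz: "distinct zs" using zs unfolding admissible_nodes_def by (auto simp: strict_sorted_iff)
  have finZ: "finite Z" unfolding Z_def by simp
  have cZ: "card Z = c" using zs distinct_card[OF dz] unfolding admissible_nodes_def Z_def by simp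
  have Zin: "Z \<subseteq> {-1<..<1}" using zs unfolding admissible_nodes_def Z_def by auto
  define q where "q = (\<Prod>z\<in>Z. [:-z, 1:]^2 :: real poly)"
  have q0: "q \<noteq> 0" unfolding q_def using qZ_nz[OF finZ] .
  have qn: "0 \<le> poly q t" for t unfolding q_def by (rule qZ_nonneg)
  have dq: "degree q = 2 * c" unfolding q_def using degree_qZ[OF finZ] cZ by simp
  define w' where "w' = (\<lambda>t. poly q t * w t)"
  have "weight_function w'"
    unfolding weight_function_def w'_def
    using pw_int[of q] I_pos[OF q0] qn w_nonneg unfolding I_def by auto
  then interpret V: wf w' by unfold_locales
  have VI: "V.I s = I (q * s)" for s
    unfolding V.I_def unfolding I_def w'_def by (simp add: mult_ac)
  define m' where "m' = n - c"
  have m': "1 \<le> m'" "0 < m'" using c unfolding m'_def by auto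
  define l where "l = V.lag m' 0"
  have dl: "degree l = m' - 1" unfolding l_def using V.lag_deg[OF m'(2)] .
  have l0: "l \<noteq> 0" unfolding l_def using V.lag_nz[OF m'(2)] by auto
  have dll: "degree (l * l) < 2 * m' - 1" using dl l0 m' by (simp add: degree_mult_eq)
  have eq_l: "V.I ([:0, 1:] * (l * l)) = V.xi' m' 0 * V.I (l * l)"
  proof (rule antisym)
    show "V.I ([:0, 1:] * (l * l)) \<le> V.xi' m' 0 * V.I (l * l)"
      using V.upper[OF m'(1) m'(2) dll] V.lag_zero unfolding l_def by auto
    show "V.xi' m' 0 * V.I (l * l) \<le> V.I ([:0, 1:] * (l * l))"
      using V.lower[OF m'(1) m'(2) dll] by auto
  qed
  have Ill: "0 < V.I (l * l)" using V.I_square_pos[OF l0] .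
  define pst where "pst = q * (l * l)"
  have pst_in: "pst \<in> {p \<in> S_polys n. \<forall>z\<in>set zs. poly p z = 0}"
  proof -
    have "degree pst = 2 * c + 2 * (m' - 1)" unfolding pst_def using q0 l0 dq dl
      by (simp add: degree_mult_eq)
    hence "degree pst \<le> 2 * n - 2" unfolding m'_def using c by simp
    moreover have "pst \<noteq> 0" unfolding pst_def using q0 l0 by simp
    moreover have "0 \<le> poly pst t" for t unfolding pst_def using qn[of t] by simp
    moreover have "poly pst z = 0" if "z \<in> set zs" for z
      unfolding pst_def q_def using qZ_root[OF finZ] that Z_def by simp
    ultimately show ?thesis unfolding S_polys_def by auto
  qed
  have rpst: "ratio w pst = V.xi' m' 0"
  proof -
    have "ratio w pst = V.I ([:0, 1:] * (l * l)) / V.I (l * l)"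
      unfolding ratio_eq VI pst_def by (simp add: mult_ac)
    then show ?thesis using eq_l Ill by simp
  qed
  have lb: "V.xi' m' 0 \<le> ratio w p" if p: "p \<in> {p \<in> S_polys n. \<forall>z\<in>set zs. poly p z = 0}" for p
  proof -
    have pn: "\<And>t. t \<in> {-1..1} \<Longrightarrow> 0 \<le> poly p t" and p0: "p \<noteq> 0" and dp: "degree p \<le> 2 * n - 2"
      and pz: "\<And>z. z \<in> Z \<Longrightarrow> poly p z = 0" using p unfolding S_polys_def Z_def by auto
    obtain s where s: "p = q * s" "\<forall>t\<in>{-1..1}. 0 \<le> poly s t"
      using factor_roots[OF finZ Zin pn pz] unfolding q_def by blast
    have s0: "s \<noteq> 0" using s p0 by auto
    have "degree p = 2 * c + degree s" using s q0 s0 dq by (simp add: degree_mult_eq)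
    hence ds: "degree s < 2 * m' - 1" using dp c n unfolding m'_def by simp
    have "V.xi' m' 0 * V.I s \<le> V.I ([:0, 1:] * s)"
    proof (rule V.lower[OF m'(1) m'(2) ds])
      fix k assume "k < m'"
      then have "V.xi' m' k \<in> {-1..1}" using V.xi_in[of k m'] by auto
      then show "0 \<le> poly s (V.xi' m' k)" using s(2) by blast
    qed auto
    moreover have "0 < V.I s" using V.I_pos[OF s0] s(2) by auto
    moreover have "ratio w p = V.I ([:0, 1:] * s) / V.I s"
      unfolding ratio_eq VI s(1) by (simp add: mult_ac)
    ultimately show ?thesis by (simp add: pos_le_divide_eq)
  qed
  show ?thesis unfolding is_min_def ratio_values_def
    using pst_in rpst lb by (intro exI[of _ "V.xi' m' 0"]) (auto simp: image_iff intro!: bexI[of _ pst])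
qed


lemma inf_le:
  assumes n: "1 \<le> n" and c: "c < n" and zs: "zs \<in> admissible_nodes (Suc c)"
  shows "Inf (ratio_values w n zs) \<le> xi' n c"
proof -
  obtain m where m: "is_min (ratio_values w n zs) m" using min_exists[OF assms] by blast
  have Im: "Inf (ratio_values w n zs) = m" using m unfolding is_min_def by (intro cInf_eq_minimum) auto
  define Z where "Z = set zs"
  have dz: "distinct zs" using zs unfolding admissible_nodes_def by (auto simp: strict_sorted_iff)
  have finZ: "finite Z" unfolding Z_def by simp
  have cZ: "card Z = c" using zs distinct_card[OF dz] unfolding admissible_nodes_def Z_def by simp
  define q where "q = (\<Prod>z\<in>Z. [:-z, 1:]^2 :: real poly)"
  define Z2 where "Z2 = (\<lambda>k. xi' n k) ` {Suc c..<n}"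
  have finZ2: "finite Z2" unfolding Z2_def by simp
  have cZ2: "card Z2 = n - Suc c" unfolding Z2_def
  proof (subst card_image)
    show "inj_on (xi' n) {Suc c..<n}"
    proof (rule inj_onI)
      fix x y assume "x \<in> {Suc c..<n}" "y \<in> {Suc c..<n}" "xi' n x = xi' n y"
      then show "x = y" using xi_inj[of x n y] by auto
    qed
  qed simp
  define r where "r = (\<Prod>z\<in>Z2. [:-z, 1:]^2 :: real poly)"
  define pb where "pb = q * r"
  have q0: "q \<noteq> 0" unfolding q_def using qZ_nz[OF finZ] .
  have r0: "r \<noteq> 0" unfolding r_def using qZ_nz[OF finZ2] .
  have pbn: "0 \<le> poly pb t" for t unfolding pb_def q_def r_def using qZ_nonneg by (simp add: mult_nonneg_nonneg)
  have "degree pb = 2 * c + 2 * (n - Suc c)" unfolding pb_def using q0 r0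
    by (simp add: degree_mult_eq q_def r_def degree_qZ[OF finZ] degree_qZ[OF finZ2] cZ cZ2)
  hence dpb: "degree pb = 2 * n - 2" using c by simp
  have pb0: "pb \<noteq> 0" unfolding pb_def using q0 r0 by simp
  have pb_in: "pb \<in> {p \<in> S_polys n. \<forall>z\<in>set zs. poly p z = 0}"
    unfolding S_polys_def using pb0 dpb pbn qZ_root[OF finZ] unfolding pb_def q_def Z_def by auto
  have "I ([:0, 1:] * pb) \<le> xi' n c * I pb"
  proof (rule upper[OF n c])
    show "degree pb < 2 * n - 1" using dpb n by simp
    show "0 \<le> poly pb (xi' n k)" for k using pbn .
    fix k assume "c < k" "k < n"
    then have "xi' n k \<in> Z2" unfolding Z2_def by auto
    then show "poly pb (xi' n k) = 0" unfolding pb_def r_def using qZ_root[OF finZ2] by simp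
  qed
  moreover have "0 < I pb" using I_pos[OF pb0] pbn by auto
  ultimately have "ratio w pb \<le> xi' n c" unfolding ratio_eq by (simp add: pos_divide_le_eq)
  moreover have "m \<le> ratio w pb" using m pb_in unfolding is_min_def ratio_values_def by auto
  ultimately show ?thesis using Im by simp
qed

lemma attain:
  assumes n: "1 \<le> n" and c: "c < n"
  shows "take c (xs n) \<in> admissible_nodes (Suc c) \<and> Inf (ratio_values w n (take c (xs n))) = xi' n c"
proof
  define zs where "zs = take c (xs n)"
  show adm: "take c (xs n) \<in> admissible_nodes (Suc c)"
    unfolding admissible_nodes_def using xs_props[of n] c set_take_subset[of c "xs n"]
    by (auto simp: sorted_wrt_take)
  define l where "l = lag n c"
  have dl: "degree l = n - 1" unfolding l_def using lag_deg[OF c] .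
  have l0: "l \<noteq> 0" unfolding l_def using lag_nz[OF c] by auto
  have dll: "degree (l * l) < 2 * n - 1" using dl l0 n by (simp add: degree_mult_eq)
  have setzs: "z \<in> set zs \<Longrightarrow> \<exists>k<c. z = xi' n k" for z
    unfolding zs_def using c xs_props(1)[of n] by (auto simp: in_set_conv_nth)
  have eq_l: "I ([:0, 1:] * (l * l)) = xi' n c * I (l * l)"
  proof (rule antisym)
    show "I ([:0, 1:] * (l * l)) \<le> xi' n c * I (l * l)"
      using upper[OF n c dll] lag_zero unfolding l_def by auto
    show "xi' n c * I (l * l) \<le> I ([:0, 1:] * (l * l))"
    proof (rule lower[OF n c dll])
      fix k assume "k < c"
      then show "poly (l * l) (xi' n k) = 0" using lag_zero[of k n c] c unfolding l_def by simp
    qed simp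
  qed
  have Ill: "0 < I (l * l)" using I_square_pos[OF l0] .
  have rl: "ratio w (l * l) = xi' n c" unfolding ratio_eq using eq_l Ill by simp
  have l_in: "l * l \<in> {p \<in> S_polys n. \<forall>z\<in>set zs. poly p z = 0}"
  proof -
    have "degree (l * l) \<le> 2 * n - 2" using dl l0 by (simp add: degree_mult_eq)
    moreover have "poly (l * l) z = 0" if "z \<in> set zs" for z
      using setzs[OF that] lag_zero c unfolding l_def by auto
    ultimately show ?thesis unfolding S_polys_def using l0 by auto
  qed
  have lb: "xi' n c \<le> ratio w p" if p: "p \<in> {p \<in> S_polys n. \<forall>z\<in>set zs. poly p z = 0}" for p
  proof -
    have pn: "\<And>t. t \<in> {-1..1} \<Longrightarrow> 0 \<le> poly p t" and p0: "p \<noteq> 0" and dp: "degree p \<le> 2 * n - 2"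
      and pz: "\<And>z. z \<in> set zs \<Longrightarrow> poly p z = 0" using p unfolding S_polys_def by auto
    have dp': "degree p < 2 * n - 1" using dp n by simp
    have "xi' n c * I p \<le> I ([:0, 1:] * p)"
    proof (rule lower[OF n c dp'])
      fix k assume "k < n"
      then have "xi' n k \<in> {-1..1}" using xi_in[of k n] by auto
      then show "0 \<le> poly p (xi' n k)" using pn by blast
    next
      fix k assume "k < c"
      then have "xi' n k \<in> set zs" unfolding zs_def using c xs_props(1)[of n]
        by (auto simp: in_set_conv_nth intro!: exI[of _ k])
      then show "poly p (xi' n k) = 0" using pz by blast
    qed
    moreover have "0 < I p" using I_pos[OF p0] pn by auto
    ultimately show ?thesis unfolding ratio_eq by (simp add: pos_le_divide_eq)
  qed
  have "Inf (ratio_values w n zs) = xi' n c"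
    unfolding ratio_values_def
    by (rule cInf_eq_minimum) (use l_in rl lb in \<open>auto simp: image_iff intro!: bexI[of _ "l * l"]\<close>)
  then show "Inf (ratio_values w n (take c (xs n))) = xi' n c" unfolding zs_def .
qed

end

theorem lemma3p4:
  fixes w :: "real \<Rightarrow> real" and n i :: nat
  assumes "weight_function w" and "1 \<le> n" and "1 \<le> i" and "i \<le> n"
  shows "(\<forall>zs\<in>admissible_nodes i. \<exists>m. is_min (ratio_values w n zs) m)
       \<and> is_max ((\<lambda>zs. Inf (ratio_values w n zs)) ` admissible_nodes i) (xi w n i)"
proof -
  interpret W: wf w by unfold_locales (rule assms(1))
  define c where "c = i - 1"
  have i: "i = Suc c" and c: "c < n" using assms unfolding c_def by auto
  have xi: "xi w n i = W.xi' n c" unfolding xi_def W.xs_def W.OP_def c_def ..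
  show ?thesis
    unfolding xi unfolding i is_max_def
    using W.min_exists[OF assms(2) c] W.inf_le[OF assms(2) c] W.attain[OF assms(2) c]
    by (auto simp: image_iff intro!: bexI[of _ "take c (W.xs n)"])
qed

end
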